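(* For all positive integers $n,d,k$, the value of the multiple-treasures-per-door search game satisfies $v_M(n,d,k)\le \frac kn$.
   Context: Multiple-treasures-per-door search game with parameters $(n,d,k)$: the hider places $d$ treasures behind $n$ doors, several treasures allowed behind the same door. In each round the searcher selects at most $k$ doors; if none of them hides a treasure not yet found, she loses; otherwise the hider reveals one not-yet-found treasure behind one of the selected doors (hider's choice). The searcher wins if she finds all $d$ treasures with a total of $d$ guesses. Players may randomize and the searcher may adapt to previous answers; $v_M(n,d,k)$ is the probability the searcher wins under optimal play by both. *)

theory Defs
  imports "HOL-Probability.Probability_Mass_Function"
begin

text \<open>A history is the list of doors at which
  treasures have been revealed so far (in order).  A pure hider
  strategy is a placement c (c x = number of treasures behind door x) together
  with a response rule r: given the history and the selected set, the door
  behind which a not-yet-found treasure is revealed.\<close>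

type_synonym searcher = "nat list \<Rightarrow> nat set"
type_synonym hider = "(nat \<Rightarrow> nat) \<times> (nat list \<Rightarrow> nat set \<Rightarrow> nat)"

fun play :: "searcher \<Rightarrow> (nat \<Rightarrow> nat) \<Rightarrow> (nat list \<Rightarrow> nat set \<Rightarrow> nat)
               \<Rightarrow> nat \<Rightarrow> nat list \<Rightarrow> bool" where
  "play s c r 0 h = True"
| "play s c r (Suc m) h =
     (if \<exists>x\<in>s h. count_list h x < c x
      then play s c r m (h @ [r h (s h)]) else False)"

definition searcher_wins :: "nat \<Rightarrow> searcher \<Rightarrow> hider \<Rightarrow> bool" where
  "searcher_wins d s hc = play s (fst hc) (snd hc) d []"

definition valid_searcher :: "nat \<Rightarrow> nat \<Rightarrow> searcher set" where
  "valid_searcher n k = {s. \<forall>h. s h \<subseteq> {..<n} \<and> card (s h) \<le> k}"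

definition valid_hider :: "nat \<Rightarrow> nat \<Rightarrow> hider set" where
  "valid_hider n d = {(c, r).
      (\<forall>x\<ge>n. c x = 0) \<and> (\<Sum>x<n. c x) = d \<and>
      (\<forall>h S. (\<exists>x\<in>S. count_list h x < c x) \<longrightarrow>
              r h S \<in> S \<and> count_list h (r h S) < c (r h S))}"

text \<open>Value of the game: the best winning probability the searcher can guarantee
  with a mixed strategy against every mixed hider strategy (max-min value; the
  game is finite, so it equals the minimax value).\<close>
definition vM :: "nat \<Rightarrow> nat \<Rightarrow> nat \<Rightarrow> real" where
  "vM n d k =
     (SUP \<sigma>\<in>{\<sigma>. set_pmf \<sigma> \<subseteq> valid_searcher n k}.
        INF \<tau>\<in>{\<tau>. set_pmf \<tau> \<subseteq> valid_hider n d}.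
           measure_pmf.prob (pair_pmf \<sigma> \<tau>) {(s, hc). searcher_wins d s hc})"

end

theory Submission
  imports Defs
begin

definition Hx :: "nat \<Rightarrow> nat \<Rightarrow> hider" where
  "Hx d x = ((\<lambda>y. if y = x then d else 0), (\<lambda>h S. x))"

lemma Hx_valid: "x < n \<Longrightarrow> Hx d x \<in> valid_hider n d"
  unfolding valid_hider_def Hx_def
  by (auto simp: if_distrib sum.delta split: if_splits)

lemma Hx_win: "0 < d \<Longrightarrow> searcher_wins d s (Hx d x) \<Longrightarrow> x \<in> s []"
  unfolding searcher_wins_def Hx_def
  by (cases d) (auto split: if_splits)

lemma prob_of_set_lt: "0 < (n::nat) \<Longrightarrow> measure_pmf.prob (pmf_of_set {..<n}) B = real (card ({..<n} \<inter> B)) / real n"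
  by (subst measure_pmf_of_set) auto

lemma sub_win: "0 < d \<Longrightarrow> {..<n} \<inter> (Hx d -` {hc. searcher_wins d s hc}) \<subseteq> s []"
proof
  fix x assume "0 < d" "x \<in> {..<n} \<inter> (Hx d -` {hc. searcher_wins d s hc})"
  then show "x \<in> s []" using Hx_win by blast
qed

lemma inner_bound:
  assumes "0 < n" "0 < d" "s \<in> valid_searcher n k"
  shows "emeasure (measure_pmf (map_pmf (Hx d) (pmf_of_set {..<n})))
           {hc. searcher_wins d s hc} \<le> ennreal (real k / real n)"
proof -
  let ?A = "{hc. searcher_wins d s hc}"
  have 1: "measure_pmf.prob (map_pmf (Hx d) (pmf_of_set {..<n})) ?A
        = measure_pmf.prob (pmf_of_set {..<n}) (Hx d -` ?A)"
    by (rule measure_map_pmf)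
  have 2: "measure_pmf.prob (pmf_of_set {..<n}) (Hx d -` ?A) = real (card ({..<n} \<inter> (Hx d -` ?A))) / real n"
    by (rule prob_of_set_lt[OF assms(1)])
  have sub: "{..<n} \<inter> (Hx d -` ?A) \<subseteq> s []"
    by (rule sub_win[OF assms(2)])
  have c: "card (s []) \<le> k" using assms(3) unfolding valid_searcher_def by blast
  have ss: "s [] \<subseteq> {..<n}" using assms(3) unfolding valid_searcher_def by blast
  have f: "finite (s [])" using ss by (rule finite_subset) simp
  have "card ({..<n} \<inter> (Hx d -` ?A)) \<le> k"
    using card_mono[OF f sub] c by linarith
  then have 3: "real (card ({..<n} \<inter> (Hx d -` ?A))) / real n \<le> real k / real n"
    by (simp add: divide_right_mono)
  have "measure_pmf.prob (map_pmf (Hx d) (pmf_of_set {..<n})) ?A \<le> real k / real n"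
    using 1 2 3 by linarith
  then show ?thesis
    unfolding measure_pmf.emeasure_eq_measure by (rule ennreal_leI)
qed

lemma of_bool_emeasure: "(\<integral>\<^sup>+x. of_bool (P x) \<partial>measure_pmf M) = emeasure (measure_pmf M) {x. P x}"
proof -
  have "(\<integral>\<^sup>+x. of_bool (P x) \<partial>measure_pmf M) = (\<integral>\<^sup>+x. indicator {x. P x} x \<partial>measure_pmf M)"
    by (intro nn_integral_cong) (simp add: indicator_def)
  also have "\<dots> = emeasure (measure_pmf M) {x. P x}"
    by (rule nn_integral_indicator) simp
  finally show ?thesis .
qed

lemma outer_bound:
  assumes "0 < n" "0 < d" "set_pmf \<sigma> \<subseteq> valid_searcher n k"
  shows "measure_pmf.prob (pair_pmf \<sigma> (map_pmf (Hx d) (pmf_of_set {..<n})))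
           {(s, hc). searcher_wins d s hc} \<le> real k / real n"
proof -
  let ?\<tau> = "map_pmf (Hx d) (pmf_of_set {..<n})"
  have "emeasure (measure_pmf (pair_pmf \<sigma> ?\<tau>)) {(s, hc). searcher_wins d s hc}
     = (\<integral>\<^sup>+s. emeasure (measure_pmf ?\<tau>) {hc. searcher_wins d s hc} \<partial>measure_pmf \<sigma>)"
    unfolding pair_pmf_def emeasure_bind_pmf
    by (intro nn_integral_cong) (simp add: indicator_def vimage_def of_bool_emeasure)
  also have "\<dots> \<le> (\<integral>\<^sup>+s. ennreal (real k / real n) \<partial>measure_pmf \<sigma>)"
  proof (intro nn_integral_mono_AE AE_pmfI)
    fix s assume "s \<in> set_pmf \<sigma>"
    then have "s \<in> valid_searcher n k" using assms(3) by blast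
    then show "emeasure (measure_pmf ?\<tau>) {hc. searcher_wins d s hc} \<le> ennreal (real k / real n)"
      by (rule inner_bound[OF assms(1,2)])
  qed
  also have "\<dots> = ennreal (real k / real n)"
    by (simp add: measure_pmf.emeasure_space_1)
  finally have "ennreal (measure_pmf.prob (pair_pmf \<sigma> ?\<tau>) {(s, hc). searcher_wins d s hc})
     \<le> ennreal (real k / real n)"
    by (simp only: measure_pmf.emeasure_eq_measure)
  moreover have "0 \<le> real k / real n" by simp
  ultimately show ?thesis by (simp only: ennreal_le_iff)
qed

theorem claim8:
  fixes n d k :: nat
  assumes "0 < n" and "0 < d" and "0 < k"
  shows "vM n d k \<le> real k / real n"
  unfolding vM_def
proof (rule cSUP_least)
  show "{\<sigma>. set_pmf \<sigma> \<subseteq> valid_searcher n k} \<noteq> {}"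
  proof -
    have "return_pmf (\<lambda>_. {}) \<in> {\<sigma>. set_pmf \<sigma> \<subseteq> valid_searcher n k}"
      by (auto simp: valid_searcher_def)
    then show ?thesis by blast
  qed
next
  fix \<sigma> assume s: "\<sigma> \<in> {\<sigma>. set_pmf \<sigma> \<subseteq> valid_searcher n k}"
  let ?\<tau> = "map_pmf (Hx d) (pmf_of_set {..<n})"
  have t: "?\<tau> \<in> {\<tau>. set_pmf \<tau> \<subseteq> valid_hider n d}"
  proof -
    have "set_pmf (pmf_of_set {..<n}) = {..<n}"
      using assms(1) by (intro set_pmf_of_set) auto
    then have "set_pmf ?\<tau> = Hx d ` {..<n}" by simp
    then show ?thesis by (simp add: image_subset_iff Hx_valid)
  qed
  have "(INF \<tau>\<in>{\<tau>. set_pmf \<tau> \<subseteq> valid_hider n d}.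
           measure_pmf.prob (pair_pmf \<sigma> \<tau>) {(s, hc). searcher_wins d s hc})
        \<le> measure_pmf.prob (pair_pmf \<sigma> ?\<tau>) {(s, hc). searcher_wins d s hc}"
    by (rule cINF_lower[OF _ t]) (intro bdd_belowI2[where m=0] measure_nonneg)
  also have "\<dots> \<le> real k / real n" using outer_bound[OF assms(1,2)] s by simp
  finally show "(INF \<tau>\<in>{\<tau>. set_pmf \<tau> \<subseteq> valid_hider n d}.
           measure_pmf.prob (pair_pmf \<sigma> \<tau>) {(s, hc). searcher_wins d s hc}) \<le> real k / real n" .
qed

end
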